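(* Under a general RLCM with $J\times K$ binary $Q$-matrix $Q$, if $(Q,\boldsymbol\Theta,\boldsymbol p)$ are jointly generically identifiable then $Q$ is generically complete, i.e. $Q$ has $K$ rows which, after a permutation of these rows and of the columns, form a $K\times K$ matrix all of whose diagonal entries equal $1$.
   Context: A $Q$-matrix is a $J\times K$ binary matrix with rows $\boldsymbol q_j$. For $\boldsymbol\alpha,\boldsymbol q\in\{0,1\}^K$, $\boldsymbol\alpha\succeq\boldsymbol q$ means $\alpha_k\ge q_k$ for all $k$; $\odot$ is the elementwise product. RLCM: latent $\boldsymbol A\in\{0,1\}^K$ with $P(\boldsymbol A=\boldsymbol\alpha)=p_{\boldsymbol\alpha}>0$, $\sum p_{\boldsymbol\alpha}=1$; given $\boldsymbol A=\boldsymbol\alpha$, responses $R_1,\dots,R_J\in\{0,1\}$ independent with $P(R_j=1\mid\boldsymbol\alpha)=\theta_{j,\boldsymbol\alpha}$, $\boldsymbol\Theta=(\theta_{j,\boldsymbol\alpha})$; constraints: $\theta_{j,\boldsymbol\alpha}=\theta_{j,\boldsymbol\alpha'}$ if $\boldsymbol\alpha\odot\boldsymbol q_j=\boldsymbol\alpha'\odot\boldsymbol q_j$, and $\theta_{j,\boldsymbol\alpha}>\theta_{j,\boldsymbol\alpha'}$ if $\boldsymbol\alpha\succeq\boldsymbol q_j$, $\boldsymbol\alpha'\not\succeq\boldsymbol q_j$. In a general RLCM (e.g. GDINA: $\theta_{j,\boldsymbol\alpha}=\sum_{S\subseteq\{k:q_{j,k}=1\}}\beta_{j,S}\prod_{k\in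 S}\alpha_k$), apart from these constraints the item parameters are free (all main and interaction effects of required attributes); the parameter space is full-dimensional in $\mathbb R^m$. $(\bar Q,\bar{\boldsymbol\Theta},\bar{\boldsymbol p})\sim(Q,\boldsymbol\Theta,\boldsymbol p)$ means $\bar Q$ equals $Q$ up to column permutation and parameters coincide (after relabeling attributes). Joint generic identifiability: the set of $(\boldsymbol\Theta,\boldsymbol p)$ for which some $(\bar Q,\bar{\boldsymbol\Theta},\bar{\boldsymbol p})\not\sim(Q,\boldsymbol\Theta,\boldsymbol p)$ ($\bar Q$ any $J\times K$ binary matrix, valid parameters) gives the same distribution of $\boldsymbol R$ has Lebesgue measure zero in the parameter space. *)

theory Defs
  imports "HOL-Analysis.Analysis"
begin

text \<open>A J x K binary Q-matrix is Q :: nat => nat => bool, entries Q j k for j < J, k < K.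
  An attribute profile alpha in {0,1}^K is represented by the set of mastered attributes,
  a subset of {..<K}.  Then alpha >= q_j  iff  q_j is a subset of alpha, and
  alpha (.) q_j corresponds to the intersection.\<close>

definition qrow :: "nat \<Rightarrow> (nat \<Rightarrow> nat \<Rightarrow> bool) \<Rightarrow> nat \<Rightarrow> nat set" where
  "qrow K Q j = {k. k < K \<and> Q j k}"

definition valid_params ::
  "nat \<Rightarrow> nat \<Rightarrow> (nat \<Rightarrow> nat \<Rightarrow> bool) \<Rightarrow> (nat \<Rightarrow> nat set \<Rightarrow> real) \<Rightarrow> (nat set \<Rightarrow> real) \<Rightarrow> bool" where
  "valid_params J K Q \<Theta> p \<longleftrightarrow>
     (\<forall>\<alpha>\<in>Pow {..<K}. p \<alpha> > 0) \<and> (\<Sum>\<alpha>\<in>Pow {..<K}. p \<alpha>) = 1 \<and>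
     (\<forall>j<J. \<forall>\<alpha>\<in>Pow {..<K}. 0 \<le> \<Theta> j \<alpha> \<and> \<Theta> j \<alpha> \<le> 1) \<and>
     (\<forall>j<J. \<forall>\<alpha>\<in>Pow {..<K}. \<forall>\<alpha>'\<in>Pow {..<K}.
        \<alpha> \<inter> qrow K Q j = \<alpha>' \<inter> qrow K Q j \<longrightarrow> \<Theta> j \<alpha> = \<Theta> j \<alpha>') \<and>
     (\<forall>j<J. \<forall>\<alpha>\<in>Pow {..<K}. \<forall>\<alpha>'\<in>Pow {..<K}.
        qrow K Q j \<subseteq> \<alpha> \<and> \<not> qrow K Q j \<subseteq> \<alpha>' \<longrightarrow> \<Theta> j \<alpha> > \<Theta> j \<alpha>')"

text \<open>P(R = r), where the response vector r in {0,1}^J is given by the set of items with R_j = 1.\<close>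
definition resp_prob ::
  "nat \<Rightarrow> nat \<Rightarrow> (nat \<Rightarrow> nat set \<Rightarrow> real) \<Rightarrow> (nat set \<Rightarrow> real) \<Rightarrow> nat set \<Rightarrow> real" where
  "resp_prob J K \<Theta> p r =
     (\<Sum>\<alpha>\<in>Pow {..<K}. p \<alpha> * (\<Prod>j<J. if j \<in> r then \<Theta> j \<alpha> else 1 - \<Theta> j \<alpha>))"

definition same_dist ::
  "nat \<Rightarrow> nat \<Rightarrow> (nat \<Rightarrow> nat set \<Rightarrow> real) \<Rightarrow> (nat set \<Rightarrow> real) \<Rightarrow>
   (nat \<Rightarrow> nat set \<Rightarrow> real) \<Rightarrow> (nat set \<Rightarrow> real) \<Rightarrow> bool" where
  "same_dist J K \<Theta>1 p1 \<Theta>2 p2 \<longleftrightarrow> (\<forall>r\<in>Pow {..<J}. resp_prob J K \<Theta>1 p1 r = resp_prob J K \<Theta>2 p2 r)"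

definition model_equiv ::
  "nat \<Rightarrow> nat \<Rightarrow> (nat \<Rightarrow> nat \<Rightarrow> bool) \<Rightarrow> (nat \<Rightarrow> nat set \<Rightarrow> real) \<Rightarrow> (nat set \<Rightarrow> real) \<Rightarrow>
   (nat \<Rightarrow> nat \<Rightarrow> bool) \<Rightarrow> (nat \<Rightarrow> nat set \<Rightarrow> real) \<Rightarrow> (nat set \<Rightarrow> real) \<Rightarrow> bool" where
  "model_equiv J K Q' \<Theta>' p' Q \<Theta> p \<longleftrightarrow>
     (\<exists>\<sigma>. bij_betw \<sigma> {..<K} {..<K} \<and>
        (\<forall>j<J. \<forall>k<K. Q' j k = Q j (\<sigma> k)) \<and>
        (\<forall>j<J. \<forall>\<alpha>\<in>Pow {..<K}. \<Theta>' j \<alpha> = \<Theta> j (\<sigma> ` \<alpha>)) \<and>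
        (\<forall>\<alpha>\<in>Pow {..<K}. p' \<alpha> = p (\<sigma> ` \<alpha>)))"

text \<open>Free coordinates of the parameter space in R^m:
  theta_{j,S} for j < J and S a subset of q_j (the value of Theta j alpha for alpha with
  alpha \<inter> q_j = S), and p_alpha for all alpha except the full profile
  (whose proportion is determined by the sum-to-one constraint).\<close>
type_synonym coord = "(nat \<times> nat set) + nat set"

definition coord_index :: "nat \<Rightarrow> nat \<Rightarrow> (nat \<Rightarrow> nat \<Rightarrow> bool) \<Rightarrow> coord set" where
  "coord_index J K Q =
     Inl ` {(j, S). j < J \<and> S \<subseteq> qrow K Q j} \<union> Inr ` (Pow {..<K} - {{..<K}})"

definition theta_of :: "nat \<Rightarrow> (nat \<Rightarrow> nat \<Rightarrow> bool) \<Rightarrow> (coord \<Rightarrow> real) \<Rightarrow> nat \<Rightarrow> nat set \<Rightarrow> real" where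
  "theta_of K Q x j \<alpha> = x (Inl (j, \<alpha> \<inter> qrow K Q j))"

definition p_of :: "nat \<Rightarrow> (coord \<Rightarrow> real) \<Rightarrow> nat set \<Rightarrow> real" where
  "p_of K x \<alpha> = (if \<alpha> = {..<K} then 1 - (\<Sum>\<beta>\<in>Pow {..<K} - {{..<K}}. x (Inr \<beta>)) else x (Inr \<alpha>))"

definition param_measure :: "nat \<Rightarrow> nat \<Rightarrow> (nat \<Rightarrow> nat \<Rightarrow> bool) \<Rightarrow> (coord \<Rightarrow> real) measure" where
  "param_measure J K Q = PiM (coord_index J K Q) (\<lambda>_. lborel)"

definition param_space :: "nat \<Rightarrow> nat \<Rightarrow> (nat \<Rightarrow> nat \<Rightarrow> bool) \<Rightarrow> (coord \<Rightarrow> real) set" where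
  "param_space J K Q = {x \<in> space (param_measure J K Q). valid_params J K Q (theta_of K Q x) (p_of K x)}"

definition jointly_generically_identifiable :: "nat \<Rightarrow> nat \<Rightarrow> (nat \<Rightarrow> nat \<Rightarrow> bool) \<Rightarrow> bool" where
  "jointly_generically_identifiable J K Q \<longleftrightarrow>
     (\<exists>N \<in> null_sets (param_measure J K Q).
        {x \<in> param_space J K Q. \<exists>Q' \<Theta>' p'. valid_params J K Q' \<Theta>' p' \<and>
            same_dist J K \<Theta>' p' (theta_of K Q x) (p_of K x) \<and>
            \<not> model_equiv J K Q' \<Theta>' p' Q (theta_of K Q x) (p_of K x)} \<subseteq> N)"

definition generically_complete :: "nat \<Rightarrow> nat \<Rightarrow> (nat \<Rightarrow> nat \<Rightarrow> bool) \<Rightarrow> bool" where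
  "generically_complete J K Q \<longleftrightarrow>
     (\<exists>r c. inj_on r {..<K} \<and> r ` {..<K} \<subseteq> {..<J} \<and> bij_betw c {..<K} {..<K} \<and>
        (\<forall>i<K. Q (r i) (c i)))"

end

theory Submission
  imports Defs
begin


lemma hall:
  fixes N :: "'a \<Rightarrow> 'b set"
  assumes "finite I" "\<forall>i\<in>I. finite (N i)" "\<forall>C\<subseteq>I. card C \<le> card (\<Union>(N ` C))"
  shows "\<exists>r. inj_on r I \<and> (\<forall>i\<in>I. r i \<in> N i)"
  using assms
proof (induction "card I" arbitrary: I N rule: less_induct)
  case less
  note fin = less.prems(1) and finN = less.prems(2) and H = less.prems(3)
  show ?case
  proof (cases "I = {}")
    case True then show ?thesis by auto
  next
    case ne: False
    show ?thesis
    proof (cases "\<forall>C. C \<subseteq> I \<and> C \<noteq> {} \<and> C \<noteq> I \<longrightarrow> card C < card (\<Union>(N ` C))")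
      case True
      obtain i where i: "i \<in> I" using ne by auto
      have "card {i} \<le> card (\<Union>(N ` {i}))" using H i by blast
      hence "card {i} \<le> card (N i)" by simp
      hence "N i \<noteq> {}" by auto
      then obtain j where j: "j \<in> N i" by auto
      define I' where "I' = I - {i}"
      define N' where "N' = (\<lambda>k. N k - {j})"
      have lt: "card I' < card I" unfolding I'_def using fin i by (metis card_Diff1_less)
      have H': "\<forall>C\<subseteq>I'. card C \<le> card (\<Union>(N' ` C))"
      proof (intro allI impI)
        fix C assume C: "C \<subseteq> I'"
        show "card C \<le> card (\<Union>(N' ` C))"
        proof (cases "C = {}")
          case True then show ?thesis by simp
        next
          case False
          have "C \<noteq> I" using C i unfolding I'_def by auto
          moreover have "C \<subseteq> I" using C unfolding I'_def by auto
          ultimately have c1: "card C < card (\<Union>(N ` C))" using True False by blast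
          have eq: "\<Union>(N' ` C) = \<Union>(N ` C) - {j}" unfolding N'_def by auto
          have "finite (\<Union>(N ` C))" using finN \<open>C \<subseteq> I\<close> fin by (meson finite_UN_I finite_subset subsetD)
          then have "card (\<Union>(N ` C)) \<le> card (\<Union>(N ` C) - {j}) + 1"
            by (metis card_Diff1_le card_Diff_singleton_if card.remove le_refl add.commute
                  Suc_eq_plus1 card_Diff_singleton le_add2 plus_1_eq_Suc)
          then show ?thesis using c1 eq by simp
        qed
      qed
      have "\<forall>k\<in>I'. finite (N' k)" using finN unfolding N'_def I'_def by auto
      moreover have "finite I'" using fin unfolding I'_def by auto
      ultimately obtain r' where r': "inj_on r' I'" "\<forall>k\<in>I'. r' k \<in> N' k"
        using less.hyps[OF lt _ _ H'] by blast
      define r where "r = r'(i := j)"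
      have "inj_on r I"
      proof (rule inj_onI)
        fix a b assume ab: "a \<in> I" "b \<in> I" "r a = r b"
        show "a = b"
        proof (cases "a = i"; cases "b = i")
          assume "a = i" "b \<noteq> i"
          then have "r b \<noteq> j" using r' ab unfolding r_def N'_def I'_def by auto
          then show ?thesis using ab \<open>a = i\<close> unfolding r_def by simp
        next
          assume "a \<noteq> i" "b = i"
          then have "r a \<noteq> j" using r' ab unfolding r_def N'_def I'_def by auto
          then show ?thesis using ab \<open>b = i\<close> unfolding r_def by simp
        next
          assume "a \<noteq> i" "b \<noteq> i"
          then show ?thesis using r'(1) ab unfolding r_def I'_def by (auto dest: inj_onD)
        qed simp
      qed
      moreover have "\<forall>k\<in>I. r k \<in> N k" using r' j unfolding r_def N'_def I'_def by auto
      ultimately show ?thesis by blast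
    next
      case False
      then obtain C where C: "C \<subseteq> I" "C \<noteq> {}" "C \<noteq> I" "\<not> card C < card (\<Union>(N ` C))" by blast
      hence C4: "card (\<Union>(N ` C)) \<le> card C" by simp
      define U where "U = \<Union>(N ` C)"
      have cU: "card U = card C" using C C4 H unfolding U_def by (simp add: le_antisym)
      have finU: "finite U" using finN C fin unfolding U_def by (meson finite_UN_I finite_subset subsetD)
      have ltC: "card C < card I" using C fin by (simp add: psubset_card_mono)
      have finC: "finite C" using C fin finite_subset by auto
      obtain r1 where r1: "inj_on r1 C" "\<forall>k\<in>C. r1 k \<in> N k"
        proof -
        have "\<forall>i\<in>C. finite (N i)" using finN C by blast
        moreover have "\<forall>D\<subseteq>C. card D \<le> card (\<Union>(N ` D))" using H C by blast
        ultimately show ?thesis using less.hyps[OF ltC finC] that by blast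
      qed
      define I2 where "I2 = I - C"
      define N2 where "N2 = (\<lambda>k. N k - U)"
      have "card C > 0" using C(2) finC by (simp add: card_gt_0_iff)
      hence lt2: "card I2 < card I" unfolding I2_def using C(1) finC card_mono[OF fin C(1)]
        by (simp add: card_Diff_subset)
      have H2: "\<forall>D\<subseteq>I2. card D \<le> card (\<Union>(N2 ` D))"
      proof (intro allI impI)
        fix D assume D: "D \<subseteq> I2"
        have finD: "finite D" using D fin unfolding I2_def using finite_subset by blast
        have eq: "\<Union>(N2 ` D) = \<Union>(N ` (D \<union> C)) - U" unfolding N2_def U_def by auto
        have sub: "U \<subseteq> \<Union>(N ` (D \<union> C))" unfolding U_def by auto
        have finDC: "finite (\<Union>(N ` (D \<union> C)))" using finN D C fin unfolding I2_def
          by (intro finite_UN_I) (auto intro: finite_subset finD finC)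
        have "card (\<Union>(N2 ` D)) = card (\<Union>(N ` (D \<union> C))) - card U"
          using eq card_Diff_subset[OF finU sub] by simp
        moreover have "D \<union> C \<subseteq> I" using D C unfolding I2_def by auto
        hence "card (D \<union> C) \<le> card (\<Union>(N ` (D \<union> C)))" using H by blast
        moreover have "card (D \<union> C) = card D + card C" using D finD finC unfolding I2_def
          by (subst card_Un_disjoint) auto
        ultimately show "card D \<le> card (\<Union>(N2 ` D))" using cU by simp
      qed
      have "\<forall>k\<in>I2. finite (N2 k)" using finN unfolding N2_def I2_def by auto
      moreover have "finite I2" using fin unfolding I2_def by auto
      ultimately obtain r2 where r2: "inj_on r2 I2" "\<forall>k\<in>I2. r2 k \<in> N2 k"
        using less.hyps[OF lt2 _ _ H2] by blast
      define r where "r = (\<lambda>k. if k \<in> C then r1 k else r2 k)"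
      have inU: "\<forall>k\<in>C. r1 k \<in> U" using r1 unfolding U_def by auto
      have notU: "\<forall>k\<in>I2. r2 k \<notin> U" using r2 unfolding N2_def by auto
      have "inj_on r I"
      proof (rule inj_onI)
        fix a b assume ab: "a \<in> I" "b \<in> I" "r a = r b"
        show "a = b"
          using ab inU notU r1(1) r2(1) unfolding r_def I2_def
          by (cases "a \<in> C"; cases "b \<in> C") (force dest: inj_onD)+
      qed
      moreover have "\<forall>k\<in>I. r k \<in> N k" using r1 r2 unfolding r_def N2_def I2_def by auto
      ultimately show ?thesis by blast
    qed
  qed
qed



lemma lin_sol:
  fixes c :: "'e \<Rightarrow> 'u \<Rightarrow> real"
  assumes "finite E" "finite U" "card E < card U"
  shows "\<exists>x. (\<exists>u\<in>U. x u \<noteq> 0) \<and> (\<forall>e\<in>E. (\<Sum>u\<in>U. c e u * x u) = 0)"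
  using assms
proof (induction E arbitrary: U c rule: finite_induct)
  case empty
  then have "U \<noteq> {}" by auto
  then obtain u where "u \<in> U" by blast
  then show ?case by (intro exI[of _ "\<lambda>v. if v = u then 1 else 0"]) auto
next
  case (insert e E)
  have cE: "card E < card U" using insert by simp
  show ?case
  proof (cases "\<forall>u\<in>U. c e u = 0")
    case True
    obtain x where x: "\<exists>u\<in>U. x u \<noteq> 0" "\<forall>e\<in>E. (\<Sum>u\<in>U. c e u * x u) = 0"
      using insert.IH[OF insert.prems(1) cE] by blast
    then show ?thesis using True by (intro exI[of _ x]) auto
  next
    case False
    then obtain u0 where u0: "u0 \<in> U" "c e u0 \<noteq> 0" by auto
    define U' where "U' = U - {u0}"
    define c' where "c' = (\<lambda>e' u. c e' u - c e' u0 / c e u0 * c e u)"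
    have fU': "finite U'" using insert.prems unfolding U'_def by auto
    have cU': "card E < card U'" using insert.prems u0 unfolding U'_def
      by (simp add: card_Diff_singleton insert.hyps)
    obtain x' where x': "\<exists>u\<in>U'. x' u \<noteq> 0" "\<forall>e'\<in>E. (\<Sum>u\<in>U'. c' e' u * x' u) = 0"
      using insert.IH[OF fU' cU'] by blast
    define S where "S = (\<Sum>u\<in>U'. c e u * x' u)"
    define x where "x = x'(u0 := - S / c e u0)"
    have split: "(\<Sum>u\<in>U. g u * x u) = g u0 * x u0 + (\<Sum>u\<in>U'. g u * x' u)" for g
    proof -
      have "(\<Sum>u\<in>U. g u * x u) = g u0 * x u0 + (\<Sum>u\<in>U'. g u * x u)"
        unfolding U'_def using u0 insert.prems(1) by (simp add: sum.remove)
      moreover have "(\<Sum>u\<in>U'. g u * x u) = (\<Sum>u\<in>U'. g u * x' u)"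
        unfolding x_def U'_def by (intro sum.cong) auto
      ultimately show ?thesis by simp
    qed
    have "\<forall>e'\<in>insert e E. (\<Sum>u\<in>U. c e' u * x u) = 0"
    proof
      fix e' assume e': "e' \<in> insert e E"
      show "(\<Sum>u\<in>U. c e' u * x u) = 0"
      proof (cases "e' = e")
        case True
        then show ?thesis using split[of "c e"] u0 unfolding x_def S_def by simp
      next
        case False
        then have "e' \<in> E" using e' by auto
        have "(\<Sum>u\<in>U'. c e' u * x' u) = (\<Sum>u\<in>U'. c' e' u * x' u + c e' u0 / c e u0 * (c e u * x' u))"
          unfolding c'_def by (intro sum.cong) (auto simp: algebra_simps)
        also have "\<dots> = c e' u0 / c e u0 * S"
          using x'(2) \<open>e' \<in> E\<close> unfolding S_def by (simp add: sum.distrib sum_distrib_left)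
        finally show ?thesis using split[of "c e'"] u0 unfolding x_def by simp
      qed
    qed
    moreover have "\<exists>u\<in>U. x u \<noteq> 0" using x' unfolding x_def U'_def by auto
    ultimately show ?thesis by blast
  qed
qed

lemma sum_pow_prod_one:
  fixes a :: "'a \<Rightarrow> real"
  assumes "finite A"
  shows "(\<Sum>r\<in>Pow A. \<Prod>j\<in>A. if j \<in> r then a j else 1 - a j) = 1"
proof -
  have "(\<Prod>j\<in>A. a j + (1 - a j)) = (\<Sum>X\<in>Pow A. (\<Prod>x\<in>X. a x) * (\<Prod>x\<in>A-X. 1 - a x))"
    by (rule prod_add[OF assms])
  moreover have "(\<Prod>j\<in>A. a j + (1 - a j)) = 1" by simp
  moreover have "(\<Prod>j\<in>A. if j \<in> X then a j else 1 - a j) = (\<Prod>x\<in>X. a x) * (\<Prod>x\<in>A-X. 1 - a x)"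
    if "X \<in> Pow A" for X
  proof -
    have "(\<Prod>j\<in>A. if j \<in> X then a j else 1 - a j) = (\<Prod>x\<in>A \<inter> {x. x \<in> X}. a x) * (\<Prod>x\<in>A \<inter> - {x. x \<in> X}. 1 - a x)"
      by (rule prod.If_cases[OF assms])
    moreover have "A \<inter> {x. x \<in> X} = X" "A \<inter> - {x. x \<in> X} = A - X" using that by auto
    ultimately show ?thesis by simp
  qed
  ultimately show ?thesis by (metis (no_types, lifting) sum.cong)
qed



lemma nonident:
  assumes V: "valid_params J K Q \<Theta> p" and C: "C \<subseteq> {..<K}"
    and cA: "card {j. j < J \<and> qrow K Q j \<inter> C \<noteq> {}} < card C"
  shows "\<exists>p'. valid_params J K Q \<Theta> p' \<and> same_dist J K \<Theta> p' \<Theta> p \<and> \<not> model_equiv J K Q \<Theta> p' Q \<Theta> p"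
proof -
  define A where "A = {j. j < J \<and> qrow K Q j \<inter> C \<noteq> {}}"
  have Veq: "\<forall>j<J. \<forall>\<alpha>\<in>Pow {..<K}. \<forall>\<alpha>'\<in>Pow {..<K}.
        \<alpha> \<inter> qrow K Q j = \<alpha>' \<inter> qrow K Q j \<longrightarrow> \<Theta> j \<alpha> = \<Theta> j \<alpha>'"
    using V unfolding valid_params_def by blast
  have psum: "(\<Sum>\<alpha>\<in>Pow {..<K}. p \<alpha>) = 1" using V unfolding valid_params_def by blast
  have finA: "finite A" unfolding A_def by auto
  have finC: "finite C" using C finite_subset by blast
  have AJ: "A \<subseteq> {..<J}" unfolding A_def by auto
  define f where "f = (\<lambda>j \<alpha> r. if j \<in> r then \<Theta> j \<alpha> else 1 - \<Theta> j \<alpha>)"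
  define c where "c = (\<lambda>r \<gamma>. \<Prod>j\<in>A. f j \<gamma> r)"
  have "card (Pow A) < card (Pow C)" using cA finA finC unfolding A_def by (simp add: card_Pow)
  then obtain d0 where d0: "\<exists>\<gamma>\<in>Pow C. d0 \<gamma> \<noteq> 0" "\<forall>r\<in>Pow A. (\<Sum>\<gamma>\<in>Pow C. c r \<gamma> * d0 \<gamma>) = 0"
    using lin_sol[of "Pow A" "Pow C" c] finA finC by auto
  define d where "d = (\<lambda>\<alpha>. if \<alpha> \<subseteq> C then d0 \<alpha> else 0)"
  have PC: "Pow C \<subseteq> Pow {..<K}" using C by auto
  have finP: "finite (Pow {..<K})" by simp
  have sumd: "(\<Sum>\<alpha>\<in>Pow {..<K}. d \<alpha> * g \<alpha>) = (\<Sum>\<gamma>\<in>Pow C. d0 \<gamma> * g \<gamma>)" for g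
  proof -
    have "(\<Sum>\<alpha>\<in>Pow {..<K}. d \<alpha> * g \<alpha>) = (\<Sum>\<gamma>\<in>Pow C. d \<gamma> * g \<gamma>)"
      by (rule sum.mono_neutral_right[OF finP PC]) (auto simp: d_def)
    also have "\<dots> = (\<Sum>\<gamma>\<in>Pow C. d0 \<gamma> * g \<gamma>)"
      by (rule sum.cong) (auto simp: d_def)
    finally show ?thesis .
  qed
  have key: "(\<Sum>\<alpha>\<in>Pow {..<K}. d \<alpha> * (\<Prod>j<J. f j \<alpha> r)) = 0" for r
  proof -
    have "(\<Prod>j<J. f j \<gamma> r) = c (r \<inter> A) \<gamma> * (\<Prod>j\<in>{..<J} - A. f j {} r)" if "\<gamma> \<in> Pow C" for \<gamma>
    proof -
      have "(\<Prod>j<J. f j \<gamma> r) = (\<Prod>j\<in>A. f j \<gamma> r) * (\<Prod>j\<in>{..<J} - A. f j \<gamma> r)"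
        using prod.subset_diff[OF AJ, of "\<lambda>j. f j \<gamma> r"] by (simp add: mult.commute)
      moreover have "(\<Prod>j\<in>{..<J} - A. f j \<gamma> r) = (\<Prod>j\<in>{..<J} - A. f j {} r)"
      proof (intro prod.cong refl)
        fix j assume j: "j \<in> {..<J} - A"
        then have "qrow K Q j \<inter> C = {}" unfolding A_def by blast
        then have "\<gamma> \<inter> qrow K Q j = {} \<inter> qrow K Q j" using that by blast
        moreover have "\<gamma> \<in> Pow {..<K}" "{} \<in> Pow {..<K}" using that PC by auto
        moreover have "j < J" using j by simp
        ultimately have "\<Theta> j \<gamma> = \<Theta> j {}" using Veq by blast
        then show "f j \<gamma> r = f j {} r" unfolding f_def by simp
      qed
      moreover have "(\<Prod>j\<in>A. f j \<gamma> r) = c (r \<inter> A) \<gamma>" unfolding c_def f_def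
        by (intro prod.cong) auto
      ultimately show ?thesis by simp
    qed
    then have "(\<Sum>\<alpha>\<in>Pow {..<K}. d \<alpha> * (\<Prod>j<J. f j \<alpha> r))
        = (\<Sum>\<gamma>\<in>Pow C. (c (r \<inter> A) \<gamma> * d0 \<gamma>) * (\<Prod>j\<in>{..<J} - A. f j {} r))"
      unfolding sumd by (intro sum.cong) auto
    also have "\<dots> = (\<Sum>\<gamma>\<in>Pow C. c (r \<inter> A) \<gamma> * d0 \<gamma>) * (\<Prod>j\<in>{..<J} - A. f j {} r)"
      by (simp add: sum_distrib_right)
    also have "\<dots> = 0" using d0(2) by (simp add: Int_lower2)
    finally show ?thesis .
  qed
  have sum0: "(\<Sum>\<alpha>\<in>Pow {..<K}. d \<alpha>) = 0"
  proof -
    have "(\<Sum>\<alpha>\<in>Pow {..<K}. d \<alpha>) = (\<Sum>\<gamma>\<in>Pow C. d0 \<gamma> * 1)" using sumd[of "\<lambda>_. 1"] by simp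
    also have "\<dots> = (\<Sum>\<gamma>\<in>Pow C. d0 \<gamma> * (\<Sum>r\<in>Pow A. c r \<gamma>))"
      unfolding c_def f_def using sum_pow_prod_one[OF finA] by simp
    also have "\<dots> = (\<Sum>r\<in>Pow A. \<Sum>\<gamma>\<in>Pow C. c r \<gamma> * d0 \<gamma>)"
      by (simp add: sum_distrib_left sum.swap[of _ "Pow C"] mult.commute)
    also have "\<dots> = 0" using d0(2) by simp
    finally show ?thesis .
  qed
  have ppos: "\<forall>\<alpha>\<in>Pow {..<K}. p \<alpha> > 0" using V unfolding valid_params_def by auto
  define m where "m = Min (p ` Pow {..<K})"
  have m: "m > 0" "\<forall>\<alpha>\<in>Pow {..<K}. m \<le> p \<alpha>"
  proof -
    have ne: "p ` Pow {..<K} \<noteq> {}" by blast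
    have "m \<in> p ` Pow {..<K}" unfolding m_def using Min_in[OF _ ne] finP by blast
    then show "m > 0" using ppos by blast
    show "\<forall>\<alpha>\<in>Pow {..<K}. m \<le> p \<alpha>" unfolding m_def using finP by simp
  qed
  define D where "D = (\<Sum>\<alpha>\<in>Pow {..<K}. \<bar>d \<alpha>\<bar>) + 1"
  have D: "D > 0" "\<forall>\<alpha>\<in>Pow {..<K}. \<bar>d \<alpha>\<bar> \<le> D"
  proof -
    have "(\<Sum>\<alpha>\<in>Pow {..<K}. \<bar>d \<alpha>\<bar>) \<ge> 0" by (simp add: sum_nonneg)
    then show "D > 0" unfolding D_def by linarith
    show "\<forall>\<alpha>\<in>Pow {..<K}. \<bar>d \<alpha>\<bar> \<le> D"
    proof
      fix \<alpha> assume "\<alpha> \<in> Pow {..<K}"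
      then have "\<bar>d \<alpha>\<bar> \<le> (\<Sum>\<alpha>\<in>Pow {..<K}. \<bar>d \<alpha>\<bar>)"
        by (intro member_le_sum) auto
      then show "\<bar>d \<alpha>\<bar> \<le> D" unfolding D_def by simp
    qed
  qed
  define e where "e = m / (2 * D)"
  have e: "e > 0" using m D unfolding e_def by simp
  define S1 where "S1 = (\<Sum>\<alpha>\<in>Pow {..<K}. p \<alpha> * d \<alpha>)"
  define S2 where "S2 = (\<Sum>\<alpha>\<in>Pow {..<K}. (d \<alpha>)^2)"
  have S2: "S2 > 0"
  proof -
    obtain \<gamma> where g: "\<gamma> \<in> Pow C" "d0 \<gamma> \<noteq> 0" using d0 by auto
    have "(d \<gamma>)^2 > 0" using g unfolding d_def by auto
    moreover have "(d \<gamma>)^2 \<le> S2" unfolding S2_def using g PC by (intro member_le_sum) auto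
    ultimately show ?thesis by linarith
  qed
  obtain \<epsilon> where eps: "\<epsilon> > 0" "\<epsilon> \<le> e" "2 * S1 + \<epsilon> * S2 \<noteq> 0"
  proof (cases "2 * S1 + e * S2 = 0")
    case True
    have "e * S2 > 0" using e S2 by simp
    then have "2 * S1 + (e/2) * S2 \<noteq> 0" using True by linarith
    then show ?thesis using that[of "e/2"] e by simp
  next
    case False
    then show ?thesis using that[of e] e by simp
  qed
  define p' where "p' = (\<lambda>\<alpha>. p \<alpha> + \<epsilon> * d \<alpha>)"
  have p'pos: "\<forall>\<alpha>\<in>Pow {..<K}. p' \<alpha> > 0"
  proof
    fix \<alpha> assume a: "\<alpha> \<in> Pow {..<K}"
    have "\<bar>\<epsilon> * d \<alpha>\<bar> \<le> e * D" using D(2) a eps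
      by (simp add: abs_mult mult_mono)
    also have "e * D = m / 2" unfolding e_def using D by simp
    finally have "\<bar>\<epsilon> * d \<alpha>\<bar> \<le> m / 2" .
    then have "- (m/2) \<le> \<epsilon> * d \<alpha>" by (simp add: abs_le_iff)
    moreover have "m \<le> p \<alpha>" using m(2) a by blast
    ultimately show "p' \<alpha> > 0" using m(1) unfolding p'_def by linarith
  qed
  have p'sum: "(\<Sum>\<alpha>\<in>Pow {..<K}. p' \<alpha>) = 1"
    using psum sum0 unfolding p'_def by (simp add: sum.distrib sum_distrib_left[symmetric])
  have valid': "valid_params J K Q \<Theta> p'"
    using V p'pos p'sum unfolding valid_params_def by (elim conjE) (intro conjI; assumption)
  have same: "same_dist J K \<Theta> p' \<Theta> p"
    unfolding same_dist_def resp_prob_def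
  proof
    fix r
    have "(\<Sum>\<alpha>\<in>Pow {..<K}. p' \<alpha> * (\<Prod>j<J. if j \<in> r then \<Theta> j \<alpha> else 1 - \<Theta> j \<alpha>))
       = (\<Sum>\<alpha>\<in>Pow {..<K}. p \<alpha> * (\<Prod>j<J. f j \<alpha> r)) + \<epsilon> * (\<Sum>\<alpha>\<in>Pow {..<K}. d \<alpha> * (\<Prod>j<J. f j \<alpha> r))"
      unfolding p'_def f_def by (simp add: algebra_simps sum.distrib sum_distrib_left)
    then show "(\<Sum>\<alpha>\<in>Pow {..<K}. p' \<alpha> * (\<Prod>j<J. if j \<in> r then \<Theta> j \<alpha> else 1 - \<Theta> j \<alpha>))
       = (\<Sum>\<alpha>\<in>Pow {..<K}. p \<alpha> * (\<Prod>j<J. if j \<in> r then \<Theta> j \<alpha> else 1 - \<Theta> j \<alpha>))"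
      using key[of r] unfolding f_def by simp
  qed
  have noneq: "\<not> model_equiv J K Q \<Theta> p' Q \<Theta> p"
  proof
    assume "model_equiv J K Q \<Theta> p' Q \<Theta> p"
    then obtain \<sigma> where \<sigma>: "bij_betw \<sigma> {..<K} {..<K}" "\<forall>\<alpha>\<in>Pow {..<K}. p' \<alpha> = p (\<sigma> ` \<alpha>)"
      unfolding model_equiv_def by blast
    have bP: "bij_betw (image \<sigma>) (Pow {..<K}) (Pow {..<K})" by (rule bij_betw_Pow[OF \<sigma>(1)])
    have "(\<Sum>\<alpha>\<in>Pow {..<K}. (p' \<alpha>)^2) = (\<Sum>\<alpha>\<in>Pow {..<K}. (p (\<sigma> ` \<alpha>))^2)"
      using \<sigma>(2) by simp
    also have "\<dots> = (\<Sum>\<alpha>\<in>Pow {..<K}. (p \<alpha>)^2)"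
      using sum.reindex_bij_betw[OF bP, of "\<lambda>\<alpha>. (p \<alpha>)^2"] by simp
    finally have eq: "(\<Sum>\<alpha>\<in>Pow {..<K}. (p' \<alpha>)^2) = (\<Sum>\<alpha>\<in>Pow {..<K}. (p \<alpha>)^2)" .
    have "(\<Sum>\<alpha>\<in>Pow {..<K}. (p' \<alpha>)^2) = (\<Sum>\<alpha>\<in>Pow {..<K}. (p \<alpha>)^2) + \<epsilon> * (2 * S1 + \<epsilon> * S2)"
      unfolding p'_def S1_def S2_def
      by (simp add: power2_eq_square algebra_simps sum.distrib sum_distrib_left)
    with eq have "\<epsilon> * (2 * S1 + \<epsilon> * S2) = 0" by simp
    then show False using eps by simp
  qed
  show ?thesis using valid' same noneq by blast
qed



lemma not_complete_deficient:
  assumes "\<not> generically_complete J K Q"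
  shows "\<exists>C\<subseteq>{..<K}. card {j. j < J \<and> qrow K Q j \<inter> C \<noteq> {}} < card C"
proof (rule ccontr)
  assume H0: "\<not> ?thesis"
  define N where "N = (\<lambda>k. {j. j < J \<and> Q j k})"
  have eq: "\<Union>(N ` C) = {j. j < J \<and> qrow K Q j \<inter> C \<noteq> {}}" if "C \<subseteq> {..<K}" for C
    using that unfolding N_def qrow_def by auto
  have H: "\<forall>C\<subseteq>{..<K}. card C \<le> card (\<Union>(N ` C))"
    using H0 eq by (simp add: not_less)
  have "\<forall>i\<in>{..<K}. finite (N i)" unfolding N_def by auto
  then obtain r where r: "inj_on r {..<K}" "\<forall>i\<in>{..<K}. r i \<in> N i"
    using hall[OF _ _ H] by blast
  have "r ` {..<K} \<subseteq> {..<J}" using r(2) unfolding N_def by auto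
  moreover have "\<forall>i<K. Q (r i) (id i)" using r(2) unfolding N_def by auto
  moreover have "bij_betw id {..<K} {..<K}" by simp
  ultimately have "generically_complete J K Q" unfolding generically_complete_def using r(1) by blast
  then show False using assms by blast
qed



lemma box_lemma:
  fixes J K :: nat and Q :: "nat \<Rightarrow> nat \<Rightarrow> bool"
  defines "n \<equiv> real (card (Pow {..<K::nat}))"
  defines "lo \<equiv> (\<lambda>i::coord. case i of Inl (j, S) \<Rightarrow> if S = qrow K Q j then 7/10 else 2/10 | Inr \<beta> \<Rightarrow> 1/(2*n))"
  defines "hi \<equiv> (\<lambda>i::coord. case i of Inl (j, S) \<Rightarrow> if S = qrow K Q j then 8/10 else 3/10 | Inr \<beta> \<Rightarrow> 1/n)"
  shows "PiE (coord_index J K Q) (\<lambda>i. {lo i..hi i}) \<subseteq> param_space J K Q"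
    and "emeasure (param_measure J K Q) (PiE (coord_index J K Q) (\<lambda>i. {lo i..hi i})) > 0"
    and "PiE (coord_index J K Q) (\<lambda>i. {lo i..hi i}) \<in> sets (param_measure J K Q)"
proof -
  define I where "I = coord_index J K Q"
  have "{(j, S). j < J \<and> S \<subseteq> qrow K Q j} \<subseteq> {..<J} \<times> Pow {..<K}" unfolding qrow_def by auto
  then have "finite {(j, S). j < J \<and> S \<subseteq> qrow K Q j}" by (rule finite_subset) simp
  then have finI: "finite I" unfolding I_def coord_index_def by simp
  have npos: "n \<ge> 1" unfolding n_def by (simp add: card_Pow)
  have nn: "1/(2*n) < 1/n"
  proof -
    have "1/(2*n) = (1/n)/2" by simp
    moreover have "1/n > 0" using npos by simp
    ultimately show ?thesis by linarith
  qed
  have lohi: "lo i < hi i" for i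
    using nn unfolding lo_def hi_def by (auto split: sum.split prod.split)
  have neq: "hi i \<noteq> lo i" for i using lohi[of i] by simp
  show sets: "PiE (coord_index J K Q) (\<lambda>i. {lo i..hi i}) \<in> sets (param_measure J K Q)"
    unfolding param_measure_def using finI unfolding I_def by (intro sets_PiM_I_finite) auto
  interpret product_sigma_finite "\<lambda>_. lborel" by standard
  have "emeasure (param_measure J K Q) (PiE (coord_index J K Q) (\<lambda>i. {lo i..hi i}))
      = (\<Prod>i\<in>I. emeasure lborel {lo i..hi i})"
    unfolding param_measure_def I_def using finI unfolding I_def by (subst emeasure_PiM) auto
  also have "\<dots> = (\<Prod>i\<in>I. ennreal (hi i - lo i))"
    using lohi by (intro prod.cong refl emeasure_lborel_Icc less_imp_le)
  finally show "emeasure (param_measure J K Q) (PiE (coord_index J K Q) (\<lambda>i. {lo i..hi i})) > 0"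
    using lohi neq finI by (simp add: zero_less_iff_neq_zero not_le less_imp_le)
  show "PiE (coord_index J K Q) (\<lambda>i. {lo i..hi i}) \<subseteq> param_space J K Q"
  proof
    fix x assume x: "x \<in> PiE (coord_index J K Q) (\<lambda>i. {lo i..hi i})"
    have xI: "\<And>i. i \<in> I \<Longrightarrow> lo i \<le> x i \<and> x i \<le> hi i" using x unfolding I_def by (auto simp: PiE_iff)
    have sp: "x \<in> space (param_measure J K Q)"
      using x unfolding param_measure_def space_PiM by (auto simp: PiE_iff)
    define P' where "P' = Pow {..<K} - {{..<K}}"
    have inl: "Inl (j, S) \<in> I" if "j < J" "S \<subseteq> qrow K Q j" for j S
      using that unfolding I_def coord_index_def by auto
    have inr: "Inr \<beta> \<in> I" if "\<beta> \<in> P'" for \<beta>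
      using that unfolding I_def coord_index_def P'_def by auto
    have th: "theta_of K Q x j \<alpha> = x (Inl (j, \<alpha> \<inter> qrow K Q j))" for j \<alpha> unfolding theta_of_def by simp
    have thb: "2/10 \<le> theta_of K Q x j \<alpha> \<and> theta_of K Q x j \<alpha> \<le> 8/10" if "j < J" for j \<alpha>
      using xI[OF inl[OF that, of "\<alpha> \<inter> qrow K Q j"]] unfolding th lo_def hi_def
      by (auto split: if_splits)
    have thtop: "theta_of K Q x j \<alpha> \<ge> 7/10" if "j < J" "qrow K Q j \<subseteq> \<alpha>" for j \<alpha>
    proof -
      have "\<alpha> \<inter> qrow K Q j = qrow K Q j" using that by auto
      then show ?thesis using xI[OF inl[OF that(1), of "\<alpha> \<inter> qrow K Q j"]] unfolding th lo_def hi_def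
        by auto
    qed
    have thlow: "theta_of K Q x j \<alpha> \<le> 3/10" if "j < J" "\<not> qrow K Q j \<subseteq> \<alpha>" for j \<alpha>
    proof -
      have "\<alpha> \<inter> qrow K Q j \<noteq> qrow K Q j" using that by auto
      then show ?thesis using xI[OF inl[OF that(1), of "\<alpha> \<inter> qrow K Q j"]] unfolding th lo_def hi_def
        by auto
    qed
    have pr: "1/(2*n) \<le> x (Inr \<beta>) \<and> x (Inr \<beta>) \<le> 1/n" if "\<beta> \<in> P'" for \<beta>
      using xI[OF inr[OF that]] unfolding lo_def hi_def by simp
    have cP': "card P' = card (Pow {..<K}) - 1" unfolding P'_def by (simp add: card_Diff_singleton)
    have "(\<Sum>\<beta>\<in>P'. x (Inr \<beta>)) \<le> (\<Sum>\<beta>\<in>P'. 1/n)" using pr by (intro sum_mono) auto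
    also have "\<dots> = real (card P') / n" by simp
    also have "\<dots> = (n - 1) / n" using cP' npos unfolding n_def
      by (simp add: of_nat_diff card_Pow)
    finally have sle: "(\<Sum>\<beta>\<in>P'. x (Inr \<beta>)) \<le> (n - 1) / n" .
    have "(n - 1) / n < 1" using npos by simp
    hence pfull: "p_of K x {..<K} > 0" using sle unfolding p_of_def P'_def by simp
    have ppos: "\<forall>\<alpha>\<in>Pow {..<K}. p_of K x \<alpha> > 0"
    proof
      fix \<alpha> assume a: "\<alpha> \<in> Pow {..<K}"
      show "p_of K x \<alpha> > 0"
      proof (cases "\<alpha> = {..<K}")
        case True then show ?thesis using pfull by simp
      next
        case False
        then have "\<alpha> \<in> P'" using a unfolding P'_def by auto
        then have "x (Inr \<alpha>) \<ge> 1/(2*n)" using pr by blast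
        moreover have "1/(2*n) > 0" using npos by simp
        ultimately have "x (Inr \<alpha>) > 0" by linarith
        then show ?thesis using False unfolding p_of_def by simp
      qed
    qed
    have psum: "(\<Sum>\<alpha>\<in>Pow {..<K}. p_of K x \<alpha>) = 1"
    proof -
      have "(\<Sum>\<alpha>\<in>Pow {..<K}. p_of K x \<alpha>) = p_of K x {..<K} + (\<Sum>\<alpha>\<in>P'. p_of K x \<alpha>)"
        unfolding P'_def by (subst sum.remove[of _ "{..<K}"]) auto
      also have "(\<Sum>\<alpha>\<in>P'. p_of K x \<alpha>) = (\<Sum>\<alpha>\<in>P'. x (Inr \<alpha>))"
        unfolding P'_def p_of_def by (intro sum.cong) auto
      finally show ?thesis unfolding p_of_def P'_def by simp
    qed
    have "valid_params J K Q (theta_of K Q x) (p_of K x)"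
      unfolding valid_params_def
    proof (intro conjI)
      show "\<forall>\<alpha>\<in>Pow {..<K}. 0 < p_of K x \<alpha>" by (rule ppos)
      show "sum (p_of K x) (Pow {..<K}) = 1" by (rule psum)
      show "\<forall>j<J. \<forall>\<alpha>\<in>Pow {..<K}. 0 \<le> theta_of K Q x j \<alpha> \<and> theta_of K Q x j \<alpha> \<le> 1"
      proof (intro allI impI ballI)
        fix j \<alpha> assume "j < J"
        from thb[OF this, of \<alpha>] show "0 \<le> theta_of K Q x j \<alpha> \<and> theta_of K Q x j \<alpha> \<le> 1" by linarith
      qed
      show "\<forall>j<J. \<forall>\<alpha>\<in>Pow {..<K}. \<forall>\<alpha>'\<in>Pow {..<K}.
        \<alpha> \<inter> qrow K Q j = \<alpha>' \<inter> qrow K Q j \<longrightarrow> theta_of K Q x j \<alpha> = theta_of K Q x j \<alpha>'"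
        unfolding theta_of_def by simp
      show "\<forall>j<J. \<forall>\<alpha>\<in>Pow {..<K}. \<forall>\<alpha>'\<in>Pow {..<K}.
        qrow K Q j \<subseteq> \<alpha> \<and> \<not> qrow K Q j \<subseteq> \<alpha>' \<longrightarrow> theta_of K Q x j \<alpha>' < theta_of K Q x j \<alpha>"
      proof (intro allI impI ballI)
        fix j \<alpha> \<alpha>' assume "j < J" "qrow K Q j \<subseteq> \<alpha> \<and> \<not> qrow K Q j \<subseteq> \<alpha>'"
        then show "theta_of K Q x j \<alpha>' < theta_of K Q x j \<alpha>"
          using thtop[of j \<alpha>] thlow[of j \<alpha>'] by linarith
      qed
    qed
    then show "x \<in> param_space J K Q" unfolding param_space_def using sp by blast
  qed
qed

theorem theorem5:
  fixes J K :: nat and Q :: "nat \<Rightarrow> nat \<Rightarrow> bool"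
  assumes "jointly_generically_identifiable J K Q"
  shows "generically_complete J K Q"
proof (rule ccontr)
  assume nc: "\<not> generically_complete J K Q"
  obtain C where C: "C \<subseteq> {..<K}" "card {j. j < J \<and> qrow K Q j \<inter> C \<noteq> {}} < card C"
    using not_complete_deficient[OF nc] by blast
  obtain N where N: "N \<in> null_sets (param_measure J K Q)"
    "{x \<in> param_space J K Q. \<exists>Q' \<Theta>' p'. valid_params J K Q' \<Theta>' p' \<and>
            same_dist J K \<Theta>' p' (theta_of K Q x) (p_of K x) \<and>
            \<not> model_equiv J K Q' \<Theta>' p' Q (theta_of K Q x) (p_of K x)} \<subseteq> N"
    using assms unfolding jointly_generically_identifiable_def by blast
  have "param_space J K Q \<subseteq> N"
  proof
    fix x assume x: "x \<in> param_space J K Q"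
    then have V: "valid_params J K Q (theta_of K Q x) (p_of K x)" unfolding param_space_def by blast
    obtain p' where "valid_params J K Q (theta_of K Q x) p'" "same_dist J K (theta_of K Q x) p' (theta_of K Q x) (p_of K x)"
      "\<not> model_equiv J K Q (theta_of K Q x) p' Q (theta_of K Q x) (p_of K x)"
      using nonident[OF V C] by blast
    then show "x \<in> N" using N(2) x by blast
  qed
  with box_lemma(1)[of J K Q] obtain B where B: "B \<subseteq> N" "emeasure (param_measure J K Q) B > 0"
    "B \<in> sets (param_measure J K Q)"
    using box_lemma(2,3)[of J K Q] by (meson order_trans)
  have "emeasure (param_measure J K Q) B \<le> emeasure (param_measure J K Q) N"
    using B N(1) by (intro emeasure_mono) auto
  then show False using B(2) null_setsD1[OF N(1)] by simp
qed


end
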